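(* Let $G\simeq G'\rtimes A$ be a Frobenius group whose Frobenius kernel is the commutator subgroup $G'$ and with (necessarily abelian) Frobenius complement $A$. Then for every $x\in G\setminus G'$ one has $\mathrm{nr}(x)\notin\mathbb{Z}[G]$.
   Context: A Frobenius group is a finite group $G$ with a proper nontrivial subgroup $H$ (a Frobenius complement) such that $H\cap gHg^{-1}=\{1\}$ for all $g\in G\setminus H$; then there is a unique normal subgroup $N$ (the Frobenius kernel) with $G=N\rtimes H$. $\mathrm{nr}$ denotes the reduced norm of $\mathbb{Q}[G]$, with values in $\zeta(\mathbb{Q}[G])\subseteq\mathbb{Q}[G]$. *)

theory Defs
  imports "HOL-Algebra.Solvable_Groups" "Jordan_Normal_Form.Determinant"
begin

definition frobenius_complement :: "('a, 'b) monoid_scheme \<Rightarrow> 'a set \<Rightarrow> bool" where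
  "frobenius_complement G H \<longleftrightarrow>
     group G \<and> finite (carrier G) \<and> subgroup H G \<and> H \<noteq> {\<one>\<^bsub>G\<^esub>} \<and> H \<noteq> carrier G \<and>
     (\<forall>g \<in> carrier G - H. H \<inter> (g <#\<^bsub>G\<^esub> H #>\<^bsub>G\<^esub> inv\<^bsub>G\<^esub> g) = {\<one>\<^bsub>G\<^esub>})"

definition frobenius_kernel :: "('a, 'b) monoid_scheme \<Rightarrow> 'a set \<Rightarrow> 'a set \<Rightarrow> bool" where
  "frobenius_kernel G H N \<longleftrightarrow>
     frobenius_complement G H \<and> N \<lhd> G \<and> N \<inter> H = {\<one>\<^bsub>G\<^esub>} \<and> N <#>\<^bsub>G\<^esub> H = carrier G"

definition is_rep :: "('a, 'b) monoid_scheme \<Rightarrow> nat \<Rightarrow> ('a \<Rightarrow> complex mat) \<Rightarrow> bool" where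
  "is_rep G n \<rho> \<longleftrightarrow> n > 0 \<and> (\<forall>g \<in> carrier G. \<rho> g \<in> carrier_mat n n) \<and>
     \<rho> \<one>\<^bsub>G\<^esub> = 1\<^sub>m n \<and>
     (\<forall>g \<in> carrier G. \<forall>h \<in> carrier G. \<rho> (g \<otimes>\<^bsub>G\<^esub> h) = \<rho> g * \<rho> h)"

definition invariant_subspace :: "('a, 'b) monoid_scheme \<Rightarrow> nat \<Rightarrow> ('a \<Rightarrow> complex mat) \<Rightarrow> complex vec set \<Rightarrow> bool" where
  "invariant_subspace G n \<rho> W \<longleftrightarrow> W \<subseteq> carrier_vec n \<and> 0\<^sub>v n \<in> W \<and>
     (\<forall>v \<in> W. \<forall>w \<in> W. v + w \<in> W) \<and> (\<forall>c. \<forall>v \<in> W. c \<cdot>\<^sub>v v \<in> W) \<and>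
     (\<forall>g \<in> carrier G. \<forall>v \<in> W. \<rho> g *\<^sub>v v \<in> W)"

definition irrep :: "('a, 'b) monoid_scheme \<Rightarrow> nat \<Rightarrow> ('a \<Rightarrow> complex mat) \<Rightarrow> bool" where
  "irrep G n \<rho> \<longleftrightarrow> is_rep G n \<rho> \<and>
     (\<forall>W. invariant_subspace G n \<rho> W \<longrightarrow> W = {0\<^sub>v n} \<or> W = carrier_vec n)"

definition rep_char :: "('a, 'b) monoid_scheme \<Rightarrow> nat \<Rightarrow> ('a \<Rightarrow> complex mat) \<Rightarrow> 'a \<Rightarrow> complex" where
  "rep_char G n \<rho> = (\<lambda>g. if g \<in> carrier G then (\<Sum>i<n. \<rho> g $$ (i, i)) else 0)"

definition irr_chars :: "('a, 'b) monoid_scheme \<Rightarrow> ('a \<Rightarrow> complex) set" where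
  "irr_chars G = {\<chi>. \<exists>n \<rho>. irrep G n \<rho> \<and> \<chi> = rep_char G n \<rho>}"

definition rep_of_char :: "('a, 'b) monoid_scheme \<Rightarrow> ('a \<Rightarrow> complex) \<Rightarrow> nat \<times> ('a \<Rightarrow> complex mat)" where
  "rep_of_char G \<chi> = (SOME (n, \<rho>). irrep G n \<rho> \<and> \<chi> = rep_char G n \<rho>)"

text \<open>Elements of Q[G] are functions carrier G \<rightarrow> Q (coefficients); a representation is
  extended linearly.\<close>
definition rep_alg :: "('a, 'b) monoid_scheme \<Rightarrow> nat \<Rightarrow> ('a \<Rightarrow> complex mat) \<Rightarrow> ('a \<Rightarrow> rat) \<Rightarrow> complex mat" where
  "rep_alg G n \<rho> \<alpha> = mat n n (\<lambda>(i, j). \<Sum>g \<in> carrier G. of_rat (\<alpha> g) * \<rho> g $$ (i, j))"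

text \<open>Reduced norm of Q[G], computed after extension of scalars to C (a splitting field):
  nr(alpha) = sum over irreducible characters chi of det(rho_chi(alpha)) e_chi, where
  e_chi = chi(1)/|G| sum_g chi(g^-1) g is the central primitive idempotent.
  The result is given by its coefficient function G \<rightarrow> C.\<close>
definition reduced_norm :: "('a, 'b) monoid_scheme \<Rightarrow> ('a \<Rightarrow> rat) \<Rightarrow> 'a \<Rightarrow> complex" where
  "reduced_norm G \<alpha> = (\<lambda>g. if g \<in> carrier G then
     (\<Sum>\<chi> \<in> irr_chars G.
        (case rep_of_char G \<chi> of (n, \<rho>) \<Rightarrow> det (rep_alg G n \<rho> \<alpha>))
        * \<chi> \<one>\<^bsub>G\<^esub> / of_nat (card (carrier G)) * \<chi> (inv\<^bsub>G\<^esub> g))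
     else 0)"

definition grp_elem :: "('a, 'b) monoid_scheme \<Rightarrow> 'a \<Rightarrow> 'a \<Rightarrow> rat" where
  "grp_elem G x = (\<lambda>g. if g = x then 1 else 0)"

definition in_integral_group_ring :: "('a, 'b) monoid_scheme \<Rightarrow> ('a \<Rightarrow> complex) \<Rightarrow> bool" where
  "in_integral_group_ring G \<beta> \<longleftrightarrow> (\<forall>g \<in> carrier G. \<beta> g \<in> \<int>)"

end

theory Submission
  imports Defs "Jordan_Normal_Form.Schur_Decomposition" "HOL-Algebra.Multiplicative_Group"
begin


lemma trace_mult_comm:
  fixes A B :: "'x::comm_ring_1 mat"
  assumes A: "A \<in> carrier_mat n m" and B: "B \<in> carrier_mat m n"
  shows "(\<Sum>i<n. (A*B)$$(i,i)) = (\<Sum>j<m. (B*A)$$(j,j))"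
proof -
  have "(\<Sum>i<n. (A*B)$$(i,i)) = (\<Sum>i<n. \<Sum>k<m. A$$(i,k) * B$$(k,i))"
    using A B by (intro sum.cong refl) (auto simp: scalar_prod_def atLeast0LessThan)
  also have "\<dots> = (\<Sum>k<m. \<Sum>i<n. B$$(k,i) * A$$(i,k))"
    by (subst sum.swap) (simp add: mult.commute)
  also have "\<dots> = (\<Sum>j<m. (B*A)$$(j,j))"
    using A B by (intro sum.cong refl) (auto simp: scalar_prod_def atLeast0LessThan)
  finally show ?thesis .
qed

lemma zero_col_contra:
  fixes B C :: "complex mat"
  assumes B: "B \<in> carrier_mat n n" and C: "C \<in> carrier_mat n n"
    and BC: "B * C = d \<cdot>\<^sub>m 1\<^sub>m n" and d: "d \<noteq> 0" and j: "j < n"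
    and z: "\<forall>i<n. B$$(i,j) = 0"
  shows False
proof -
  have "B *\<^sub>v unit_vec n j = 0\<^sub>v n"
    using B j z by (intro eq_vecI) auto
  moreover have "unit_vec n j \<noteq> 0\<^sub>v n" using j
    by (metis index_unit_vec(1) index_zero_vec(1) zero_neq_one)
  ultimately have "det B = 0" unfolding det_0_iff_vec_prod_zero[OF B] using j
    by (intro exI[of _ "unit_vec n j"]) auto
  hence "det (B * C) = 0" using det_mult[OF B C] by simp
  moreover have "det (d \<cdot>\<^sub>m 1\<^sub>m n) = d ^ n" by simp
  ultimately show False using BC d by simp
qed

lemma mat_eq_one_if_fix:
  fixes A :: "complex mat"
  assumes A: "A \<in> carrier_mat n n" and fx: "\<forall>v\<in>carrier_vec n. A *\<^sub>v v = v"
  shows "A = 1\<^sub>m n"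
proof (rule eq_matI)
  fix i j assume i: "i < dim_row (1\<^sub>m n)" and j: "j < dim_col (1\<^sub>m n)"
  have "A $$ (i,j) = (A *\<^sub>v unit_vec n j) $ i" using A i j by simp
  also have "\<dots> = unit_vec n j $ i" using fx by simp
  finally show "A $$ (i,j) = 1\<^sub>m n $$ (i,j)" using i j by auto
qed (use A in auto)

lemma eigen_root_unity:
  fixes M :: "complex mat"
  assumes M: "M \<in> carrier_mat n n" and pw: "M ^\<^sub>m k = 1\<^sub>m n"
  shows "\<exists>es. length es = n \<and> (\<forall>e\<in>set es. e ^ k = 1) \<and> (\<Sum>i<n. M$$(i,i)) = sum_list es"
proof -
  obtain es where cp: "char_poly M = (\<Prod> a \<leftarrow> es. [:- a, 1:])" and len: "length es = n"
    using char_poly_factorized[OF M] by blast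
  obtain B P Q where sd: "schur_decomposition M es = (B,P,Q)" by (metis prod_cases3)
  from schur_decomposition[OF M cp sd]
  have sim: "similar_mat_wit M B P Q" and dB: "diag_mat B = es" by auto
  from sim M have PBQ: "{M,B,P,Q} \<subseteq> carrier_mat n n" "Q * P = 1\<^sub>m n" "M = P * B * Q"
    unfolding similar_mat_wit_def Let_def by auto
  hence Bc: "B \<in> carrier_mat n n" and Pc: "P \<in> carrier_mat n n" and Qc: "Q \<in> carrier_mat n n" by auto
  have "(\<Sum>i<n. M$$(i,i)) = (\<Sum>i<n. ((P * B) * Q)$$(i,i))" using PBQ by simp
  also have "\<dots> = (\<Sum>i<n. (Q * (P * B))$$(i,i))"
    by (rule trace_mult_comm) (use Bc Pc Qc in auto)
  also have "Q * (P * B) = (Q * P) * B" using Bc Pc Qc by (simp add: assoc_mult_mat)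
  also have "\<dots> = B" using PBQ Bc by simp
  also have "(\<Sum>i<n. B$$(i,i)) = sum_list es"
    unfolding dB[symmetric] diag_mat_def using Bc
    by (simp add: sum_list_map_eq_sum_count atLeast0LessThan[symmetric] sum.list_conv_set_nth)
  finally have tr: "(\<Sum>i<n. M$$(i,i)) = sum_list es" .
  have "e ^ k = 1" if e: "e \<in> set es" for e
  proof -
    have "poly (char_poly M) e = 0" unfolding cp poly_prod_list
      using e by (auto simp: prod_list_zero_iff)
    hence "eigenvalue M e" using eigenvalue_root_char_poly[OF M] by simp
    then obtain v where ev: "eigenvector M v e" unfolding eigenvalue_def by auto
    have "M ^\<^sub>m k *\<^sub>v v = e ^ k \<cdot>\<^sub>v v" by (rule eigenvector_pow[OF M ev])
    hence "v = e ^ k \<cdot>\<^sub>v v" using ev M unfolding pw eigenvector_def by auto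
    moreover from ev M have "v \<in> carrier_vec n" "v \<noteq> 0\<^sub>v n" unfolding eigenvector_def by auto
    then obtain i where "i < n" "v $ i \<noteq> 0" by (metis eq_vecI carrier_vecD index_zero_vec)
    ultimately show ?thesis by (metis index_smult_vec(1) mult_cancel_right1 \<open>v \<in> carrier_vec n\<close> carrier_vecD)
  qed
  with tr len show ?thesis by blast
qed



locale frep = group G for G (structure) +
  fixes n :: nat and \<rho> :: "'a \<Rightarrow> complex mat"
  assumes rep: "is_rep G n \<rho>"
begin

lemma n_pos: "n > 0" using rep unfolding is_rep_def by auto
lemma rho_carrier[simp]: "g \<in> carrier G \<Longrightarrow> \<rho> g \<in> carrier_mat n n"
  using rep unfolding is_rep_def by auto
lemma rho_dims[simp]: "g \<in> carrier G \<Longrightarrow> dim_row (\<rho> g) = n" "g \<in> carrier G \<Longrightarrow> dim_col (\<rho> g) = n"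
  using rho_carrier carrier_matD by blast+
lemma rho_one[simp]: "\<rho> \<one> = 1\<^sub>m n"
  using rep unfolding is_rep_def by auto
lemma rho_mult: "g \<in> carrier G \<Longrightarrow> h \<in> carrier G \<Longrightarrow> \<rho> (g \<otimes> h) = \<rho> g * \<rho> h"
  using rep unfolding is_rep_def by auto
lemma rho_inv: "g \<in> carrier G \<Longrightarrow> \<rho> g * \<rho> (inv g) = 1\<^sub>m n"
  by (metis inv_closed r_inv rho_mult rho_one)
lemma rho_inv': "g \<in> carrier G \<Longrightarrow> \<rho> (inv g) * \<rho> g = 1\<^sub>m n"
  by (metis inv_closed l_inv rho_mult rho_one)
lemma rho_pow: "g \<in> carrier G \<Longrightarrow> \<rho> (g [^] (k::nat)) = \<rho> g ^\<^sub>m k"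
  by (induction k) (auto simp: rho_mult)

lemma trace_values:
  assumes fin: "finite (carrier G)" and g: "g \<in> carrier G"
  shows "\<exists>es. length es = n \<and> (\<forall>e\<in>set es. e ^ card (carrier G) = 1) \<and>
          (\<Sum>i<n. \<rho> g $$ (i,i)) = sum_list es"
proof -
  have "\<rho> g ^\<^sub>m card (carrier G) = 1\<^sub>m n"
    using rho_pow[OF g, of "card (carrier G)"] pow_order_eq_1[OF g] by (simp add: Coset.order_def)
  thus ?thesis using eigen_root_unity[OF rho_carrier[OF g]] by blast
qed

lemma rho_mult_vec:
  assumes "g \<in> carrier G" "h \<in> carrier G" "v \<in> carrier_vec n"
  shows "\<rho> g *\<^sub>v (\<rho> h *\<^sub>v v) = \<rho> (g \<otimes> h) *\<^sub>v v"
  using assms by (simp add: rho_mult assoc_mult_mat_vec[OF rho_carrier rho_carrier])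

end

locale firr = frep +
  assumes irr: "\<forall>W. invariant_subspace G n \<rho> W \<longrightarrow> W = {0\<^sub>v n} \<or> W = carrier_vec n"
begin

lemma irr_nonzero:
  assumes "invariant_subspace G n \<rho> W" "w \<in> W" "w \<noteq> 0\<^sub>v n"
  shows "W = carrier_vec n"
  using irr assms by auto

lemma dim_bound:
  assumes fin: "finite (carrier G)"
  shows "n \<le> card (carrier G)"
proof (rule ccontr)
  assume "\<not> n \<le> card (carrier G)"
  hence nk: "card (carrier G) < n" by simp
  define k where "k = card (carrier G)"
  define W where "W = {v \<in> carrier_vec n. \<exists>c. \<forall>i<n. v$i = (\<Sum>g\<in>carrier G. c g * \<rho> g $$ (i,0))}"
  have inv: "invariant_subspace G n \<rho> W"
    unfolding invariant_subspace_def
  proof (intro conjI ballI allI)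
    show "W \<subseteq> carrier_vec n" unfolding W_def by auto
    show "0\<^sub>v n \<in> W" unfolding W_def by (auto intro!: exI[of _ "\<lambda>_. 0"])
  next
    fix v w assume "v \<in> W" "w \<in> W"
    then obtain c d where v: "v \<in> carrier_vec n" "\<forall>i<n. v$i = (\<Sum>g\<in>carrier G. c g * \<rho> g $$ (i,0))"
      and w: "w \<in> carrier_vec n" "\<forall>i<n. w$i = (\<Sum>g\<in>carrier G. d g * \<rho> g $$ (i,0))"
      unfolding W_def by auto
    show "v + w \<in> W" unfolding W_def using v w
      by (auto intro!: exI[of _ "\<lambda>g. c g + d g"] simp: sum.distrib distrib_right)
  next
    fix a v assume "v \<in> W"
    then obtain c where v: "v \<in> carrier_vec n" "\<forall>i<n. v$i = (\<Sum>g\<in>carrier G. c g * \<rho> g $$ (i,0))"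
      unfolding W_def by auto
    show "a \<cdot>\<^sub>v v \<in> W" unfolding W_def using v
      by (auto intro!: exI[of _ "\<lambda>g. a * c g"] simp: sum_distrib_left mult.assoc)
  next
    fix h v assume h: "h \<in> carrier G" and "v \<in> W"
    then obtain c where v: "v \<in> carrier_vec n" "\<forall>i<n. v$i = (\<Sum>g\<in>carrier G. c g * \<rho> g $$ (i,0))"
      unfolding W_def by auto
    have "(\<rho> h *\<^sub>v v) $ i = (\<Sum>g\<in>carrier G. c (inv h \<otimes> g) * \<rho> g $$ (i,0))" if i: "i < n" for i
    proof -
      have "(\<rho> h *\<^sub>v v) $ i = (\<Sum>k<n. \<rho> h $$ (i,k) * v $ k)"
        using h v i by (simp add: scalar_prod_def atLeast0LessThan)
      also have "\<dots> = (\<Sum>k<n. \<rho> h $$ (i,k) * (\<Sum>g\<in>carrier G. c g * \<rho> g $$ (k,0)))"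
        using v by simp
      also have "\<dots> = (\<Sum>g\<in>carrier G. c g * (\<Sum>k<n. \<rho> h $$ (i,k) * \<rho> g $$ (k,0)))"
        by (simp add: sum_distrib_left sum_distrib_right sum.swap[of _ "carrier G"] mult.assoc mult.left_commute)
      also have "\<dots> = (\<Sum>g\<in>carrier G. c g * \<rho> (h \<otimes> g) $$ (i,0))"
        using h i n_pos by (intro sum.cong refl) (simp add: rho_mult scalar_prod_def atLeast0LessThan)
      also have "\<dots> = (\<Sum>g\<in>carrier G. c (inv h \<otimes> g) * \<rho> g $$ (i,0))"
        by (rule sum.reindex_bij_witness[where i="\<lambda>g. inv h \<otimes> g" and j="\<lambda>g. h \<otimes> g"])
           (use h in \<open>auto simp: m_assoc[symmetric]\<close>)
      finally show ?thesis .
    qed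
    thus "\<rho> h *\<^sub>v v \<in> W" unfolding W_def using h v
      by (auto intro!: exI[of _ "\<lambda>g. c (inv h \<otimes> g)"] mult_mat_vec_carrier[OF rho_carrier[OF h]])
  qed
  have u0: "unit_vec n 0 \<in> W" unfolding W_def
  proof (safe intro!: exI[of _ "\<lambda>g. if g = \<one> then 1 else 0"])
    fix i assume "i < n"
    thus "unit_vec n 0 $ i = (\<Sum>g\<in>carrier G. (if g = \<one> then 1 else 0) * \<rho> g $$ (i, 0))"
      using n_pos fin by (simp add: if_distrib[where f="\<lambda>x. x * _"] cong: if_cong)
  qed auto
  have "unit_vec n 0 \<noteq> 0\<^sub>v n" using n_pos
    by (metis index_unit_vec(1) index_zero_vec(1) zero_neq_one)
  hence Wall: "W = carrier_vec n" using irr_nonzero[OF inv u0] by blast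
  have "\<forall>j. \<exists>c. j < n \<longrightarrow> (\<forall>i<n. unit_vec n j $ i = (\<Sum>g\<in>carrier G. c g * \<rho> g $$ (i,0)))"
  proof
    fix j show "\<exists>c. j < n \<longrightarrow> (\<forall>i<n. unit_vec n j $ i = (\<Sum>g\<in>carrier G. c g * \<rho> g $$ (i,0)))"
    proof (cases "j < n")
      case True
      hence "unit_vec n j \<in> W" using Wall by simp
      thus ?thesis unfolding W_def by blast
    qed simp
  qed
  from choice[OF this] obtain cf where cf0: "\<forall>j. j < n \<longrightarrow>
      (\<forall>i<n. unit_vec n j $ i = (\<Sum>g\<in>carrier G. cf j g * \<rho> g $$ (i,0)))" by blast
  have cf: "\<And>j i. j < n \<Longrightarrow> i < n \<Longrightarrow>
      unit_vec n j $ i = (\<Sum>g\<in>carrier G. cf j g * \<rho> g $$ (i,0))" using cf0 by blast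
  obtain e where e: "bij_betw e {0..<k} (carrier G)"
    using ex_bij_betw_nat_finite[OF fin] unfolding k_def by blast
  define B where "B = mat n n (\<lambda>(i,l). if l < k then \<rho> (e l) $$ (i,0) else 0)"
  define C where "C = mat n n (\<lambda>(l,j). if l < k then cf j (e l) else (0::complex))"
  have B: "B \<in> carrier_mat n n" and C: "C \<in> carrier_mat n n" unfolding B_def C_def by auto
  have "B * C = 1 \<cdot>\<^sub>m 1\<^sub>m n"
  proof (rule eq_matI)
    fix i j assume i: "i < dim_row (1 \<cdot>\<^sub>m 1\<^sub>m n)" and j: "j < dim_col (1 \<cdot>\<^sub>m (1\<^sub>m n :: complex mat))"
    hence i: "i < n" and j: "j < n" by auto
    have "(B * C) $$ (i,j) = (\<Sum>l<n. (if l < k then \<rho> (e l) $$ (i,0) * cf j (e l) else 0))"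
      using i j unfolding B_def C_def by (auto simp: scalar_prod_def atLeast0LessThan intro!: sum.cong)
    also have "\<dots> = (\<Sum>l<k. \<rho> (e l) $$ (i,0) * cf j (e l))"
      by (rule sum.mono_neutral_cong_right) (use nk k_def in auto)
    also have "\<dots> = (\<Sum>g\<in>carrier G. \<rho> g $$ (i,0) * cf j g)"
      using sum.reindex_bij_betw[OF e, of "\<lambda>g. \<rho> g $$ (i,0) * cf j g"] by (simp add: atLeast0LessThan)
    also have "\<dots> = unit_vec n j $ i" using cf[OF j i] by (simp add: mult.commute)
    finally show "(B * C) $$ (i,j) = (1 \<cdot>\<^sub>m 1\<^sub>m n) $$ (i,j)" using i j by auto
  qed (auto simp: B_def C_def)
  moreover have "\<forall>i<n. B $$ (i, n - 1) = 0" unfolding B_def using nk k_def by auto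
  ultimately show False using zero_col_contra[OF B C, where d=1 and j="n - 1"] nk by auto
qed

end

lemma irrep_firr: "group G \<Longrightarrow> irrep G n \<rho> \<Longrightarrow> firr G n \<rho>"
  unfolding irrep_def firr_def firr_axioms_def frep_def frep_axioms_def by auto

lemma finite_irr_chars:
  assumes grp: "group G" and fin: "finite (carrier G)"
  shows "finite (irr_chars G)"
proof -
  define K where "K = card (carrier G)"
  define U where "U = {z::complex. z ^ K = 1}"
  have K: "K > 0" unfolding K_def using fin group.subgroup_self[OF grp]
    by (metis card_gt_0_iff empty_iff group.is_monoid grp monoid.one_closed)
  have finU: "finite U" unfolding U_def by (rule finite_roots_unity) (use K in simp)
  define TS where "TS = sum_list ` {es. set es \<subseteq> U \<and> length es \<le> K}"
  have finTS: "finite TS" unfolding TS_def using finite_lists_length_le[OF finU] by blast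
  have "irr_chars G \<subseteq> {f. \<forall>x. (x \<in> carrier G \<longrightarrow> f x \<in> TS) \<and> (x \<notin> carrier G \<longrightarrow> f x = 0)}"
  proof safe
    fix \<chi> x assume "\<chi> \<in> irr_chars G"
    then obtain n \<rho> where ir: "irrep G n \<rho>" and ch: "\<chi> = rep_char G n \<rho>"
      unfolding irr_chars_def by auto
    interpret firr G n \<rho> using irrep_firr[OF grp ir] .
    have nK: "n \<le> K" using dim_bound[OF fin] K_def by simp
    { assume x: "x \<in> carrier G"
      obtain es where "length es = n" "\<forall>e\<in>set es. e ^ K = 1" "(\<Sum>i<n. \<rho> x $$ (i,i)) = sum_list es"
        using trace_values[OF fin x] K_def by auto
      thus "\<chi> x \<in> TS" unfolding ch rep_char_def TS_def U_def using x nK by auto }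
    { assume "x \<notin> carrier G" thus "\<chi> x = 0" unfolding ch rep_char_def by simp }
  qed
  thus ?thesis using finite_subset finite_set_of_finite_funs[OF fin finTS] by blast
qed



lemma (in group) cancel_aux1[simp]: "x \<in> carrier G \<Longrightarrow> y \<in> carrier G \<Longrightarrow> x \<otimes> (inv x \<otimes> y) = y"
  by (simp add: m_assoc[symmetric])
lemma (in group) cancel_aux2[simp]: "x \<in> carrier G \<Longrightarrow> y \<in> carrier G \<Longrightarrow> inv x \<otimes> (x \<otimes> y) = y"
  by (simp add: m_assoc[symmetric])

locale frob = group G for G (structure) +
  fixes A N
  assumes fin: "finite (carrier G)"
  and subA: "subgroup A G"
  and Aprop: "A \<noteq> carrier G"
  and frobc: "\<And>g a. g \<in> carrier G \<Longrightarrow> g \<notin> A \<Longrightarrow> a \<in> A \<Longrightarrow> g \<otimes> a \<otimes> inv g \<in> A \<Longrightarrow> a = \<one>"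
  and normN: "N \<lhd> G"
  and NA1: "N \<inter> A = {\<one>}"
  and NA2: "N <#> A = carrier G"
  and comm: "\<And>g h. g \<in> carrier G \<Longrightarrow> h \<in> carrier G \<Longrightarrow> g \<otimes> h \<otimes> inv g \<otimes> inv h \<in> N"
begin

lemma subN: "subgroup N G" by (rule normal_imp_subgroup[OF normN])
lemma N_carr: "m \<in> N \<Longrightarrow> m \<in> carrier G" by (rule subgroup.mem_carrier[OF subN])
lemma A_carr: "a \<in> A \<Longrightarrow> a \<in> carrier G" by (rule subgroup.mem_carrier[OF subA])
lemma N_inv: "m \<in> N \<Longrightarrow> inv m \<in> N" by (rule subgroup.m_inv_closed[OF subN])
lemma N_mult: "m \<in> N \<Longrightarrow> m' \<in> N \<Longrightarrow> m \<otimes> m' \<in> N" by (rule subgroup.m_closed[OF subN])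
lemma A_inv: "a \<in> A \<Longrightarrow> inv a \<in> A" by (rule subgroup.m_inv_closed[OF subA])
lemma A_mult: "a \<in> A \<Longrightarrow> a' \<in> A \<Longrightarrow> a \<otimes> a' \<in> A" by (rule subgroup.m_closed[OF subA])
lemma N_one: "\<one> \<in> N" by (rule subgroup.one_closed[OF subN])
lemma A_one: "\<one> \<in> A" by (rule subgroup.one_closed[OF subA])
lemma N_conj: "x \<in> carrier G \<Longrightarrow> m \<in> N \<Longrightarrow> inv x \<otimes> m \<otimes> x \<in> N"
  by (rule normal.inv_op_closed1[OF normN])
lemma N_conj2: "x \<in> carrier G \<Longrightarrow> m \<in> N \<Longrightarrow> x \<otimes> m \<otimes> inv x \<in> N"
  by (rule normal.inv_op_closed2[OF normN])
lemma finN: "finite N" by (rule finite_subset[OF _ fin]) (auto simp: N_carr)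
lemma finA: "finite A" by (rule finite_subset[OF _ fin]) (auto simp: A_carr)

lemma NA_unique:
  assumes m: "m \<in> N" "m' \<in> N" and a: "a \<in> A" "a' \<in> A" and eq: "m \<otimes> a = m' \<otimes> a'"
  shows "m = m' \<and> a = a'"
proof -
  have c: "m \<in> carrier G" "m' \<in> carrier G" "a \<in> carrier G" "a' \<in> carrier G"
    using m a N_carr A_carr by auto
  define x where "x = inv m' \<otimes> m"
  have xN: "x \<in> N" unfolding x_def using m N_inv N_mult by blast
  have xc: "x \<in> carrier G" using xN N_carr by blast
  have "m = m' \<otimes> x" unfolding x_def using c by simp
  hence "m' \<otimes> (x \<otimes> a) = m' \<otimes> a'" using eq c xc by (simp add: m_assoc)
  hence "inv m' \<otimes> (m' \<otimes> (x \<otimes> a)) = inv m' \<otimes> (m' \<otimes> a')" by simp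
  hence "x \<otimes> a = a'" using c xc by simp
  hence "x = a' \<otimes> inv a" using c xc by (metis inv_solve_right)
  hence "x \<in> A" using a A_inv A_mult by blast
  hence "x = \<one>" using xN NA1 by blast
  thus ?thesis using \<open>m = m' \<otimes> x\<close> \<open>x \<otimes> a = a'\<close> c by simp
qed

lemma card_G: "card (carrier G) = card N * card A"
proof -
  have "bij_betw (\<lambda>(m,a). m \<otimes> a) (N \<times> A) (carrier G)"
    unfolding bij_betw_def
  proof
    show "inj_on (\<lambda>(m,a). m \<otimes> a) (N \<times> A)"
      by (auto simp: inj_on_def dest: NA_unique)
    show "(\<lambda>(m,a). m \<otimes> a) ` (N \<times> A) = carrier G"
    proof
      show "(\<lambda>(m,a). m \<otimes> a) ` (N \<times> A) \<subseteq> carrier G" using N_carr A_carr by auto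
      show "carrier G \<subseteq> (\<lambda>(m,a). m \<otimes> a) ` (N \<times> A)"
      proof
        fix x assume "x \<in> carrier G"
        hence "x \<in> N <#> A" using NA2 by simp
        then obtain h k where "h \<in> N" "k \<in> A" "x = h \<otimes> k" unfolding set_mult_def by blast
        thus "x \<in> (\<lambda>(m,a). m \<otimes> a) ` (N \<times> A)" by (intro image_eqI[of _ _ "(h,k)"]) auto
      qed
    qed
  qed
  thus ?thesis using bij_betw_same_card card_cartesian_product by metis
qed

lemma phi_inj: "inj_on (\<lambda>(m,a). m \<otimes> a \<otimes> inv m) (N \<times> (A - {\<one>}))"
proof (rule inj_onI)
  fix p q assume p: "p \<in> N \<times> (A - {\<one>})" and q: "q \<in> N \<times> (A - {\<one>})"
    and pq: "(\<lambda>(m,a). m \<otimes> a \<otimes> inv m) p = (\<lambda>(m,a). m \<otimes> a \<otimes> inv m) q"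
  obtain m a where pe: "p = (m,a)" by (cases p)
  obtain m' a' where qe: "q = (m',a')" by (cases q)
  have m: "m \<in> N" "m' \<in> N" and a: "a \<in> A" "a' \<in> A" "a \<noteq> \<one>" "a' \<noteq> \<one>"
    and eq: "m \<otimes> a \<otimes> inv m = m' \<otimes> a' \<otimes> inv m'" using p q pq pe qe by auto
  have c: "m \<in> carrier G" "m' \<in> carrier G" "a \<in> carrier G" "a' \<in> carrier G"
    using m a N_carr A_carr by auto
  define g where "g = inv m' \<otimes> m"
  have gN: "g \<in> N" unfolding g_def using m N_inv N_mult by blast
  have gc: "g \<in> carrier G" using gN N_carr by blast
  have "g \<otimes> a \<otimes> inv g = inv m' \<otimes> (m \<otimes> a \<otimes> inv m) \<otimes> m'"
    unfolding g_def using c by (simp add: m_assoc inv_mult_group)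
  also have "\<dots> = a'" unfolding eq using c by (simp add: m_assoc)
  finally have ga: "g \<otimes> a \<otimes> inv g = a'" .
  have "g \<in> A"
  proof (rule ccontr)
    assume "g \<notin> A"
    hence "a = \<one>" using frobc[OF gc _ a(1)] ga a by auto
    thus False using a by simp
  qed
  hence "g = \<one>" using gN NA1 by blast
  hence mm: "m = m'" unfolding g_def using c inv_solve_left'[of \<one> m' m] by simp
  have "a = a'" using ga \<open>g = \<one>\<close> c by simp
  thus "p = q" using mm pe qe by simp
qed

lemma phi_img: "(\<lambda>(m,a). m \<otimes> a \<otimes> inv m) ` (N \<times> (A - {\<one>})) = carrier G - N"
proof -
  have sub: "(\<lambda>(m,a). m \<otimes> a \<otimes> inv m) ` (N \<times> (A - {\<one>})) \<subseteq> carrier G - N"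
  proof
    fix y assume "y \<in> (\<lambda>(m,a). m \<otimes> a \<otimes> inv m) ` (N \<times> (A - {\<one>}))"
    then obtain p where p: "p \<in> N \<times> (A - {\<one>})" and yp: "y = (\<lambda>(m,a). m \<otimes> a \<otimes> inv m) p" by blast
    obtain m a where "p = (m, a)" by (cases p)
    with p yp have m: "m \<in> N" and a: "a \<in> A" "a \<noteq> \<one>" and yk: "y = m \<otimes> a \<otimes> inv m" by auto
    have c: "m \<in> carrier G" "a \<in> carrier G" using m a N_carr A_carr by auto
    have "y \<notin> N"
    proof
      assume inN: "y \<in> N"
      have "inv m \<otimes> y \<otimes> m \<in> N" using N_conj[OF c(1) inN] .
      hence "a \<in> N" using c unfolding yk by (simp add: m_assoc)
      thus False using a NA1 by blast
    qed
    thus "y \<in> carrier G - N" using yk c by simp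
  qed
  have "card ((\<lambda>(m,a). m \<otimes> a \<otimes> inv m) ` (N \<times> (A - {\<one>}))) = card N * (card A - 1)"
  proof -
    have "card (N \<times> (A - {\<one>})) = card N * card (A - {\<one>})" by (rule card_cartesian_product)
    thus ?thesis using card_image[OF phi_inj] card_Diff_singleton[OF A_one] by simp
  qed
  also have "\<dots> = card (carrier G) - card N" using card_G by (simp add: right_diff_distrib')
  also have "\<dots> = card (carrier G - N)"
  proof -
    have "N \<subseteq> carrier G" using N_carr by blast
    thus ?thesis using card_Diff_subset[OF finN] by simp
  qed
  finally have "card ((\<lambda>(m,a). m \<otimes> a \<otimes> inv m) ` (N \<times> (A - {\<one>}))) = card (carrier G - N)" .
  moreover have "finite (carrier G - N)" using fin by simp
  ultimately show ?thesis using card_subset_eq sub by blast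
qed

lemma centralizer_trivial:
  assumes y: "y \<in> carrier G" "y \<notin> N" and m: "m \<in> N" and cm: "m \<otimes> y = y \<otimes> m"
  shows "m = \<one>"
proof -
  have "y \<in> (\<lambda>(m,a). m \<otimes> a \<otimes> inv m) ` (N \<times> (A - {\<one>}))" using phi_img y by blast
  then obtain p where p: "p \<in> N \<times> (A - {\<one>})" and yp: "y = (\<lambda>(m,a). m \<otimes> a \<otimes> inv m) p" by blast
  obtain k a where "p = (k, a)" by (cases p)
  with p yp have k: "k \<in> N" and a: "a \<in> A" "a \<noteq> \<one>" and yk: "y = k \<otimes> a \<otimes> inv k" by auto
  have c: "m \<in> carrier G" "k \<in> carrier G" "a \<in> carrier G" using m k a N_carr A_carr by auto
  have im: "inv (m \<otimes> k) = inv k \<otimes> inv m" using c by (simp add: inv_mult_group)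
  have "(m \<otimes> k) \<otimes> a \<otimes> inv (m \<otimes> k) = m \<otimes> y \<otimes> inv m"
    unfolding yk im using c by (simp add: m_assoc)
  also have "\<dots> = y \<otimes> m \<otimes> inv m" using cm by simp
  also have "\<dots> = y" using c y by (simp add: m_assoc)
  finally have "(\<lambda>(m,a). m \<otimes> a \<otimes> inv m) (m \<otimes> k, a) = (\<lambda>(m,a). m \<otimes> a \<otimes> inv m) (k, a)"
    using yk by simp
  moreover have "(m \<otimes> k, a) \<in> N \<times> (A - {\<one>})" using m k a N_mult by simp
  moreover have "(k, a) \<in> N \<times> (A - {\<one>})" using k a by simp
  ultimately have "(m \<otimes> k, a) = (k, a)" using inj_onD[OF phi_inj] by blast
  thus "m = \<one>" using c by simp
qed

end

lemma (in group) frob_from_kernel: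
  assumes "frobenius_kernel G A (derived G (carrier G))"
  shows "frob G A (derived G (carrier G))"
proof -
  from assms have fin: "finite (carrier G)" and subA: "subgroup A G"
    and Aprop: "A \<noteq> carrier G"
    and fc: "\<forall>g \<in> carrier G - A. A \<inter> (g <# A #> inv g) = {\<one>}"
    and nN: "derived G (carrier G) \<lhd> G"
    and NA1: "derived G (carrier G) \<inter> A = {\<one>}"
    and NA2: "derived G (carrier G) <#> A = carrier G"
    unfolding frobenius_kernel_def frobenius_complement_def by auto
  show ?thesis
  proof (rule frob.intro[OF is_group], rule frob_axioms.intro[OF fin subA Aprop _ nN NA1 NA2])
    fix g a assume g: "g \<in> carrier G" "g \<notin> A" and a: "a \<in> A" and ga: "g \<otimes> a \<otimes> inv g \<in> A"
    have "g \<otimes> a \<otimes> inv g \<in> g <# A #> inv g"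
      unfolding l_coset_def r_coset_def using a by blast
    hence "g \<otimes> a \<otimes> inv g \<in> A \<inter> (g <# A #> inv g)" using ga by simp
    hence "g \<otimes> a \<otimes> inv g = \<one>" using fc g by simp
    moreover have ac: "a \<in> carrier G" by (rule subgroup.mem_carrier[OF subA a])
    ultimately have "g \<otimes> a = \<one> \<otimes> g" using inv_solve_right'[of \<one> "g \<otimes> a" g] g ac by simp
    thus "a = \<one>" using g ac by simp
  next
    fix g h assume "g \<in> carrier G" "h \<in> carrier G"
    thus "g \<otimes> h \<otimes> inv g \<otimes> inv h \<in> derived G (carrier G)"
      unfolding derived_def by (blast intro: generate.incl)
  qed
qed



locale ffirr = frob G A N + firr G n \<rho> for G (structure) and A N n \<rho>
begin

definition VN where "VN = {v \<in> carrier_vec n. \<forall>m\<in>N. \<rho> m *\<^sub>v v = v}"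

lemma inv_VN: "invariant_subspace G n \<rho> VN"
  unfolding invariant_subspace_def
proof (intro conjI ballI allI)
  show "VN \<subseteq> carrier_vec n" unfolding VN_def by auto
  show "0\<^sub>v n \<in> VN" unfolding VN_def by (auto intro!: eq_vecI simp: N_carr)
next
  fix v w assume "v \<in> VN" "w \<in> VN"
  thus "v + w \<in> VN" unfolding VN_def
    by (auto simp: mult_add_distrib_mat_vec[OF rho_carrier[OF N_carr]])
next
  fix c v assume "v \<in> VN"
  thus "c \<cdot>\<^sub>v v \<in> VN" unfolding VN_def
    by (auto simp: mult_mat_vec[OF rho_carrier[OF N_carr]])
next
  fix g v assume g: "g \<in> carrier G" and v: "v \<in> VN"
  have "\<rho> m *\<^sub>v (\<rho> g *\<^sub>v v) = \<rho> g *\<^sub>v v" if m: "m \<in> N" for m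
  proof -
    have mc: "m \<in> carrier G" using m N_carr by blast
    have x: "inv g \<otimes> m \<otimes> g \<in> N" using N_conj[OF g m] .
    have "\<rho> m *\<^sub>v (\<rho> g *\<^sub>v v) = \<rho> (m \<otimes> g) *\<^sub>v v" using rho_mult_vec mc g v VN_def by auto
    also have "m \<otimes> g = g \<otimes> (inv g \<otimes> m \<otimes> g)" using g mc by (simp add: m_assoc)
    also have "\<rho> (g \<otimes> (inv g \<otimes> m \<otimes> g)) *\<^sub>v v = \<rho> g *\<^sub>v (\<rho> (inv g \<otimes> m \<otimes> g) *\<^sub>v v)"
      using rho_mult_vec[of g "inv g \<otimes> m \<otimes> g" v] g x N_carr v VN_def by auto
    also have "\<rho> (inv g \<otimes> m \<otimes> g) *\<^sub>v v = v" using v x unfolding VN_def by auto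
    finally show ?thesis .
  qed
  thus "\<rho> g *\<^sub>v v \<in> VN" unfolding VN_def using g v VN_def
    by (auto intro: mult_mat_vec_carrier[OF rho_carrier[OF g]])
qed

lemma VN_cases: "VN = {0\<^sub>v n} \<or> VN = carrier_vec n"
  using irr inv_VN by blast


context
  assumes VNall: "VN = carrier_vec n"
begin

lemma triv_N: "m \<in> N \<Longrightarrow> \<rho> m = 1\<^sub>m n"
  using VNall unfolding VN_def
  by (intro mat_eq_one_if_fix) (auto simp: N_carr)

lemma rho_comm: "g \<in> carrier G \<Longrightarrow> h \<in> carrier G \<Longrightarrow> \<rho> g * \<rho> h = \<rho> h * \<rho> g"
proof -
  assume g: "g \<in> carrier G" and h: "h \<in> carrier G"
  have c: "g \<otimes> h \<otimes> inv g \<otimes> inv h \<in> N" using comm[OF g h] .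
  have "g \<otimes> h = (g \<otimes> h \<otimes> inv g \<otimes> inv h) \<otimes> (h \<otimes> g)" using g h by (simp add: m_assoc)
  hence "\<rho> (g \<otimes> h) = \<rho> (g \<otimes> h \<otimes> inv g \<otimes> inv h) * \<rho> (h \<otimes> g)"
    using rho_mult g h N_carr[OF c] by (metis m_closed)
  also have "\<dots> = \<rho> (h \<otimes> g)" using triv_N[OF c] g h by simp
  finally show ?thesis using rho_mult g h by simp
qed

lemma rho_scalar: "g \<in> carrier G \<Longrightarrow> \<exists>e. \<forall>v\<in>carrier_vec n. \<rho> g *\<^sub>v v = e \<cdot>\<^sub>v v"
proof -
  assume g: "g \<in> carrier G"
  obtain es where cp: "char_poly (\<rho> g) = (\<Prod> a \<leftarrow> es. [:- a, 1:])" and len: "length es = n"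
    using char_poly_factorized[OF rho_carrier[OF g]] by blast
  define e where "e = hd es"
  have "e \<in> set es" unfolding e_def using len n_pos by (cases es) auto
  hence "poly (char_poly (\<rho> g)) e = 0" unfolding cp poly_prod_list by (auto simp: prod_list_zero_iff)
  hence "eigenvalue (\<rho> g) e" using eigenvalue_root_char_poly[OF rho_carrier[OF g]] by simp
  then obtain v0 where ev: "eigenvector (\<rho> g) v0 e" unfolding eigenvalue_def by auto
  hence v0: "v0 \<in> carrier_vec n" "v0 \<noteq> 0\<^sub>v n" "\<rho> g *\<^sub>v v0 = e \<cdot>\<^sub>v v0"
    unfolding eigenvector_def using g by auto
  define E where "E = {v \<in> carrier_vec n. \<rho> g *\<^sub>v v = e \<cdot>\<^sub>v v}"
  have "invariant_subspace G n \<rho> E" unfolding invariant_subspace_def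
  proof (intro conjI ballI allI)
    show "E \<subseteq> carrier_vec n" unfolding E_def by auto
    show "0\<^sub>v n \<in> E" unfolding E_def using g by (auto intro!: eq_vecI)
  next
    fix v w assume "v \<in> E" "w \<in> E"
    thus "v + w \<in> E" unfolding E_def using g
      by (auto simp: mult_add_distrib_mat_vec[OF rho_carrier[OF g]] smult_add_distrib_vec)
  next
    fix c v assume "v \<in> E"
    thus "c \<cdot>\<^sub>v v \<in> E" unfolding E_def using g
      by (auto simp: mult_mat_vec[OF rho_carrier[OF g]] smult_smult_assoc mult.commute)
  next
    fix h v assume h: "h \<in> carrier G" and "v \<in> E"
    hence v: "v \<in> carrier_vec n" "\<rho> g *\<^sub>v v = e \<cdot>\<^sub>v v" unfolding E_def by auto
    have "\<rho> g *\<^sub>v (\<rho> h *\<^sub>v v) = (\<rho> g * \<rho> h) *\<^sub>v v"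
      using g h v by (simp add: assoc_mult_mat_vec[OF rho_carrier rho_carrier])
    also have "\<dots> = (\<rho> h * \<rho> g) *\<^sub>v v" using rho_comm g h by simp
    also have "\<dots> = \<rho> h *\<^sub>v (e \<cdot>\<^sub>v v)"
      using g h v by (simp add: assoc_mult_mat_vec[OF rho_carrier rho_carrier])
    also have "\<dots> = e \<cdot>\<^sub>v (\<rho> h *\<^sub>v v)" using mult_mat_vec[OF rho_carrier[OF h] v(1)] .
    finally show "\<rho> h *\<^sub>v v \<in> E" unfolding E_def using h v mult_mat_vec_carrier[OF rho_carrier[OF h] v(1)] by auto
  qed
  moreover have "v0 \<in> E" unfolding E_def using v0 by auto
  ultimately have "E = carrier_vec n" using irr_nonzero v0 by blast
  thus ?thesis unfolding E_def by blast
qed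

lemma n_one: "n = 1"
proof (rule ccontr)
  assume "n \<noteq> 1"
  hence n2: "1 < n" using n_pos by simp
  define W where "W = {c \<cdot>\<^sub>v unit_vec n 0 | c::complex. True}"
  have "invariant_subspace G n \<rho> W" unfolding invariant_subspace_def
  proof (intro conjI ballI allI)
    show "W \<subseteq> carrier_vec n" unfolding W_def by auto
    show "0\<^sub>v n \<in> W" unfolding W_def by (auto intro!: exI[of _ 0] eq_vecI)
  next
    fix v w assume "v \<in> W" "w \<in> W"
    thus "v + w \<in> W" unfolding W_def by (auto simp: add_smult_distrib_vec[symmetric])
  next
    fix c v assume "v \<in> W"
    thus "c \<cdot>\<^sub>v v \<in> W" unfolding W_def by (auto simp: smult_smult_assoc)
  next
    fix h v assume h: "h \<in> carrier G" and "v \<in> W"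
    then obtain c where v: "v = c \<cdot>\<^sub>v unit_vec n 0" unfolding W_def by auto
    obtain e where e: "\<forall>v\<in>carrier_vec n. \<rho> h *\<^sub>v v = e \<cdot>\<^sub>v v" using rho_scalar[OF h] by blast
    have "\<rho> h *\<^sub>v v = e \<cdot>\<^sub>v v" using e v by auto
    also have "\<dots> = (e * c) \<cdot>\<^sub>v unit_vec n 0" unfolding v by (simp add: smult_smult_assoc)
    finally show "\<rho> h *\<^sub>v v \<in> W" unfolding W_def by blast
  qed
  moreover have "unit_vec n 0 \<in> W" unfolding W_def by (auto intro!: exI[of _ 1])
  moreover have "unit_vec n 0 \<noteq> 0\<^sub>v n" using n_pos
    by (metis index_unit_vec(1) index_zero_vec(1) zero_neq_one)
  ultimately have "W = carrier_vec n" using irr_nonzero by blast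
  hence "unit_vec n 1 \<in> W" by simp
  then obtain c :: complex where "unit_vec n 1 = c \<cdot>\<^sub>v unit_vec n 0" unfolding W_def by blast
  hence "unit_vec n 1 $ 1 = (c \<cdot>\<^sub>v unit_vec n 0) $ 1" by simp
  thus False using n2 by simp
qed

end


context
  assumes VN0: "VN = {0\<^sub>v n}"
begin

lemma Nsum_zero: "i < n \<Longrightarrow> j < n \<Longrightarrow> (\<Sum>m\<in>N. \<rho> m $$ (i,j)) = 0"
proof -
  assume i: "i < n" and j: "j < n"
  define v where "v = vec n (\<lambda>i. \<Sum>m\<in>N. \<rho> m $$ (i,j))"
  have "v \<in> VN" unfolding VN_def
  proof (safe)
    show "v \<in> carrier_vec n" unfolding v_def by simp
  next
    fix m' assume m': "m' \<in> N"
    have mc': "m' \<in> carrier G" using m' N_carr by blast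
    show "\<rho> m' *\<^sub>v v = v"
    proof (rule eq_vecI)
      fix k assume "k < dim_vec v"
      hence k: "k < n" unfolding v_def by simp
      have vc: "v \<in> carrier_vec n" unfolding v_def by simp
      have "(\<rho> m' *\<^sub>v v) $ k = (\<Sum>l<n. \<rho> m' $$ (k,l) * v $ l)"
        using k mc' vc by (simp add: scalar_prod_def atLeast0LessThan)
      also have "\<dots> = (\<Sum>l<n. \<rho> m' $$ (k,l) * (\<Sum>m\<in>N. \<rho> m $$ (l,j)))"
        unfolding v_def by (intro sum.cong refl) simp
      also have "\<dots> = (\<Sum>m\<in>N. \<Sum>l<n. \<rho> m' $$ (k,l) * \<rho> m $$ (l,j))"
        by (simp add: sum_distrib_left sum.swap[of _ N])
      also have "\<dots> = (\<Sum>m\<in>N. \<rho> (m' \<otimes> m) $$ (k,j))"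
        using k j mc' by (intro sum.cong refl) (simp add: rho_mult N_carr scalar_prod_def atLeast0LessThan)
      also have "\<dots> = (\<Sum>m\<in>N. \<rho> m $$ (k,j))"
        by (rule sum.reindex_bij_witness[where i="\<lambda>m. inv m' \<otimes> m" and j="\<lambda>m. m' \<otimes> m"])
           (use m' mc' in \<open>auto simp: N_carr N_mult N_inv\<close>)
      finally show "(\<rho> m' *\<^sub>v v) $ k = v $ k" using k unfolding v_def by simp
    qed (use mc' v_def in simp)
  qed
  hence "v = 0\<^sub>v n" using VN0 by simp
  hence "v $ i = 0" using i by simp
  thus ?thesis unfolding v_def using i by simp
qed

lemma char_vanish:
  assumes y: "y \<in> carrier G" "y \<notin> N"
  shows "(\<Sum>i<n. \<rho> y $$ (i,i)) = 0"
proof -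
  define tr where "tr = (\<lambda>M::complex mat. \<Sum>i<n. M $$ (i,i))"
  define f where "f = (\<lambda>m. inv y \<otimes> (inv m \<otimes> y \<otimes> m))"
  have fN: "f m \<in> N" if m: "m \<in> N" for m
  proof -
    have mc: "m \<in> carrier G" using m N_carr by blast
    have "inv y \<otimes> inv m \<otimes> y \<in> N" using N_conj[OF y(1) N_inv[OF m]] .
    hence "inv y \<otimes> inv m \<otimes> y \<otimes> m \<in> N" using N_mult m by blast
    thus ?thesis unfolding f_def using mc y by (simp add: m_assoc)
  qed
  have finj: "inj_on f N"
  proof (rule inj_onI)
    fix m m' assume m: "m \<in> N" and m': "m' \<in> N" and eq: "f m = f m'"
    have c: "m \<in> carrier G" "m' \<in> carrier G" using m m' N_carr by auto
    have "inv m \<otimes> y \<otimes> m = inv m' \<otimes> y \<otimes> m'" using eq c y unfolding f_def by (simp add: m_assoc)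
    hence "m' \<otimes> (inv m \<otimes> y \<otimes> m) \<otimes> inv m = m' \<otimes> (inv m' \<otimes> y \<otimes> m') \<otimes> inv m" by simp
    hence "(m' \<otimes> inv m) \<otimes> y = y \<otimes> (m' \<otimes> inv m)" using c y by (simp add: m_assoc)
    hence "m' \<otimes> inv m = \<one>" using centralizer_trivial[OF y] N_mult[OF m' N_inv[OF m]] by blast
    hence "m' = \<one> \<otimes> m" using inv_solve_right'[of \<one> m' m] c by simp
    thus "m = m'" using c by simp
  qed
  have "f ` N \<subseteq> N" using fN by blast
  hence fimg: "f ` N = N" by (rule endo_inj_surj[OF finN _ finj])
  have trc: "tr (\<rho> (inv m \<otimes> y \<otimes> m)) = tr (\<rho> y)" if m: "m \<in> N" for m
  proof -
    have mc: "m \<in> carrier G" using m N_carr by blast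
    have "\<rho> (inv m \<otimes> y \<otimes> m) = \<rho> (inv m) * (\<rho> y * \<rho> m)"
      using mc y by (simp add: rho_mult assoc_mult_mat[OF rho_carrier rho_carrier rho_carrier])
    hence "tr (\<rho> (inv m \<otimes> y \<otimes> m)) = tr (\<rho> (inv m) * (\<rho> y * \<rho> m))" by simp
    also have "\<dots> = tr ((\<rho> y * \<rho> m) * \<rho> (inv m))"
      unfolding tr_def by (rule trace_mult_comm) (use mc y in auto)
    also have "(\<rho> y * \<rho> m) * \<rho> (inv m) = \<rho> y * (\<rho> m * \<rho> (inv m))"
      using mc y by (simp add: assoc_mult_mat[OF rho_carrier rho_carrier rho_carrier])
    also have "\<dots> = \<rho> y" using rho_inv[OF mc] y by simp
    finally show ?thesis .
  qed
  have "of_nat (card N) * tr (\<rho> y) = (\<Sum>m\<in>N. tr (\<rho> (inv m \<otimes> y \<otimes> m)))"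
    using trc by simp
  also have "\<dots> = (\<Sum>m\<in>N. tr (\<rho> (y \<otimes> f m)))"
  proof (intro sum.cong refl)
    fix m assume m: "m \<in> N"
    have mc: "m \<in> carrier G" using m N_carr by blast
    show "tr (\<rho> (inv m \<otimes> y \<otimes> m)) = tr (\<rho> (y \<otimes> f m))" unfolding f_def using mc y by simp
  qed
  also have "\<dots> = (\<Sum>z\<in>N. tr (\<rho> (y \<otimes> z)))"
    using sum.reindex[OF finj, of "\<lambda>z. tr (\<rho> (y \<otimes> z))"] fimg by simp
  also have "\<dots> = (\<Sum>z\<in>N. \<Sum>i<n. \<Sum>k<n. \<rho> y $$ (i,k) * \<rho> z $$ (k,i))"
    unfolding tr_def using y by (intro sum.cong refl) (simp add: rho_mult N_carr scalar_prod_def atLeast0LessThan)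
  also have "\<dots> = (\<Sum>i<n. \<Sum>z\<in>N. \<Sum>k<n. \<rho> y $$ (i,k) * \<rho> z $$ (k,i))"
    by (rule sum.swap)
  also have "\<dots> = (\<Sum>i<n. \<Sum>k<n. \<Sum>z\<in>N. \<rho> y $$ (i,k) * \<rho> z $$ (k,i))"
    by (intro sum.cong refl) (rule sum.swap)
  also have "\<dots> = (\<Sum>i<n. \<Sum>k<n. \<rho> y $$ (i,k) * (\<Sum>z\<in>N. \<rho> z $$ (k,i)))"
    by (simp add: sum_distrib_left)
  also have "\<dots> = 0" by (auto intro!: sum.neutral simp: Nsum_zero)
  finally have "of_nat (card N) * tr (\<rho> y) = 0" .
  moreover have "card N > 0" using finN N_one by (auto simp: card_gt_0_iff)
  ultimately show ?thesis unfolding tr_def by simp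
qed

end

lemma dichotomy:
  "((\<forall>m\<in>N. \<rho> m = 1\<^sub>m n) \<and> n = 1) \<or> (\<forall>y\<in>carrier G - N. rep_char G n \<rho> y = 0)"
proof (cases "VN = carrier_vec n")
  case True thus ?thesis using triv_N n_one by blast
next
  case False
  hence "VN = {0\<^sub>v n}" using VN_cases by blast
  thus ?thesis using char_vanish unfolding rep_char_def by auto
qed

end



lemma rep_of_char_spec:
  assumes "\<chi> \<in> irr_chars G"
  shows "irrep G (fst (rep_of_char G \<chi>)) (snd (rep_of_char G \<chi>)) \<and>
         \<chi> = rep_char G (fst (rep_of_char G \<chi>)) (snd (rep_of_char G \<chi>))"
proof -
  from assms obtain n \<rho> where "irrep G n \<rho> \<and> \<chi> = rep_char G n \<rho>" unfolding irr_chars_def by auto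
  hence ex: "\<exists>p. (\<lambda>(n,\<rho>). irrep G n \<rho> \<and> \<chi> = rep_char G n \<rho>) p" by auto
  have "(\<lambda>(n,\<rho>). irrep G n \<rho> \<and> \<chi> = rep_char G n \<rho>) (rep_of_char G \<chi>)"
    unfolding rep_of_char_def using someI_ex[OF ex] .
  thus ?thesis by (cases "rep_of_char G \<chi>") auto
qed

lemma rep_alg_elem:
  assumes x: "x \<in> carrier G" and fin: "finite (carrier G)" and rx: "\<rho> x \<in> carrier_mat n n"
  shows "rep_alg G n \<rho> (grp_elem G x) = \<rho> x"
proof (rule eq_matI)
  fix i j assume i: "i < dim_row (\<rho> x)" and j: "j < dim_col (\<rho> x)"
  have "(\<Sum>g\<in>carrier G. of_rat (grp_elem G x g) * \<rho> g $$ (i, j)) = \<rho> x $$ (i,j)"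
    unfolding grp_elem_def using x fin by (simp add: if_distrib[where f="\<lambda>t. of_rat t * _"] cong: if_cong)
  thus "rep_alg G n \<rho> (grp_elem G x) $$ (i, j) = \<rho> x $$ (i, j)"
    unfolding rep_alg_def using i j rx by auto
qed (use rx in \<open>auto simp: rep_alg_def\<close>)

context ffirr
begin

lemma term_cases:
  assumes x: "x \<in> carrier G" "x \<notin> N"
  shows "rep_char G n \<rho> (inv x) = 0 \<or>
         (det (rep_alg G n \<rho> (grp_elem G x)) * rep_char G n \<rho> \<one> * rep_char G n \<rho> (inv x) = 1 \<and>
          rep_char G n \<rho> (inv x) \<noteq> 0 \<and>
          (\<forall>g\<in>carrier G. \<forall>h\<in>carrier G. rep_char G n \<rho> (g \<otimes> h) = rep_char G n \<rho> g * rep_char G n \<rho> h) \<and>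
          (\<forall>m\<in>N. rep_char G n \<rho> m = 1))"
proof (cases "\<forall>y\<in>carrier G - N. rep_char G n \<rho> y = 0")
  case True
  have "inv x \<in> carrier G - N" using x N_inv by (metis DiffI inv_closed inv_inv)
  thus ?thesis using True by blast
next
  case False
  hence triv: "\<forall>m\<in>N. \<rho> m = 1\<^sub>m n" and n1: "n = 1" using dichotomy by auto
  have ch: "rep_char G n \<rho> g = \<rho> g $$ (0,0)" if "g \<in> carrier G" for g
    unfolding rep_char_def using that n1 by simp
  have mult00: "(\<rho> g * \<rho> h) $$ (0,0) = \<rho> g $$ (0,0) * \<rho> h $$ (0,0)"
    if "g \<in> carrier G" "h \<in> carrier G" for g h
    using that n1 by (simp add: scalar_prod_def)
  have xi: "\<rho> x $$ (0,0) * \<rho> (inv x) $$ (0,0) = 1"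
    using mult00[of x "inv x"] rho_inv[of x] x n1 by simp
  have det: "det (rep_alg G n \<rho> (grp_elem G x)) = \<rho> x $$ (0,0)"
    using rep_alg_elem[where G=G and \<rho>=\<rho> and n=n, OF x(1) fin rho_carrier[OF x(1)]] det_single[of "\<rho> x"] rho_carrier[OF x(1)] x n1 by simp
  have c1: "rep_char G n \<rho> \<one> = 1" using ch[of \<one>] n1 by simp
  show ?thesis
  proof (intro disjI2 conjI ballI)
    show "det (rep_alg G n \<rho> (grp_elem G x)) * rep_char G n \<rho> \<one> * rep_char G n \<rho> (inv x) = 1"
      using det c1 ch[of "inv x"] x xi by simp
    show "rep_char G n \<rho> (inv x) \<noteq> 0" using ch[of "inv x"] x xi by auto
  next
    fix g h assume g: "g \<in> carrier G" and h: "h \<in> carrier G"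
    show "rep_char G n \<rho> (g \<otimes> h) = rep_char G n \<rho> g * rep_char G n \<rho> h"
      using ch g h mult00 rho_mult by simp
  next
    fix m assume m: "m \<in> N"
    show "rep_char G n \<rho> m = 1" using ch[of m] triv m N_carr n1 by simp
  qed
qed

end

context frob
begin

lemma frob_ffirr: "irrep G n \<rho> \<Longrightarrow> ffirr G A N n \<rho>"
  unfolding ffirr_def using irrep_firr[OF is_group] frob_axioms by blast

lemma lin_bound:
  assumes finS: "finite S"
    and lin: "\<And>\<chi>. \<chi> \<in> S \<Longrightarrow> (\<forall>g\<in>carrier G. \<forall>h\<in>carrier G. \<chi> (g \<otimes> h) = \<chi> g * \<chi> h) \<and>
                 (\<forall>m\<in>N. \<chi> m = (1::complex)) \<and> (\<forall>g. g \<notin> carrier G \<longrightarrow> \<chi> g = 0)"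
  shows "card S \<le> card A"
proof (rule ccontr)
  assume "\<not> card S \<le> card A"
  hence kL: "card A < card S" by simp
  define k where "k = card A"
  define L where "L = card S"
  have mul: "\<chi> (g \<otimes> h) = \<chi> g * \<chi> h" if "\<chi> \<in> S" "g \<in> carrier G" "h \<in> carrier G" for \<chi> g h
    using lin that by blast
  have one: "\<chi> \<one> = 1" if "\<chi> \<in> S" for \<chi> using lin[OF that] N_one by blast
  have invm: "\<chi> a * \<chi> (inv a) = 1" if "\<chi> \<in> S" "a \<in> carrier G" for \<chi> a
    using mul[of \<chi> a "inv a"] one[OF that(1)] that by simp
  have detA: "\<chi> = \<chi>'" if S: "\<chi> \<in> S" "\<chi>' \<in> S" and eqA: "\<forall>a\<in>A. \<chi> a = \<chi>' a" for \<chi> \<chi>'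
  proof
    fix g show "\<chi> g = \<chi>' g"
    proof (cases "g \<in> carrier G")
      case True
      hence "g \<in> N <#> A" using NA2 by simp
      then obtain m a where m: "m \<in> N" and a: "a \<in> A" and g: "g = m \<otimes> a" unfolding set_mult_def by blast
      have "\<chi> g = \<chi> m * \<chi> a" "\<chi>' g = \<chi>' m * \<chi>' a"
        using mul S g m a N_carr A_carr by auto
      thus ?thesis using lin[OF S(1)] lin[OF S(2)] m a eqA by simp
    next
      case False thus ?thesis using lin[OF S(1)] lin[OF S(2)] by simp
    qed
  qed
  have orth: "(\<Sum>a\<in>A. \<chi> a * \<chi>' (inv a)) = (if \<chi> = \<chi>' then of_nat k else 0)"
    if S: "\<chi> \<in> S" "\<chi>' \<in> S" for \<chi> \<chi>'
  proof (cases "\<chi> = \<chi>'")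
    case True
    thus ?thesis using invm[OF S(1)] A_carr k_def by simp
  next
    case False
    then obtain a0 where a0: "a0 \<in> A" "\<chi> a0 \<noteq> \<chi>' a0" using detA[OF S] by blast
    have a0c: "a0 \<in> carrier G" using a0 A_carr by blast
    define f where "f = (\<lambda>a. \<chi> a * \<chi>' (inv a))"
    have fm: "f (a0 \<otimes> a) = f a0 * f a" if a: "a \<in> A" for a
    proof -
      have ac: "a \<in> carrier G" using a A_carr by blast
      have "f (a0 \<otimes> a) = \<chi> a0 * \<chi> a * (\<chi>' (inv a) * \<chi>' (inv a0))"
        unfolding f_def using mul S a0c ac by (simp add: inv_mult_group)
      thus ?thesis unfolding f_def by (simp add: algebra_simps)
    qed
    have "(\<Sum>a\<in>A. f a) = (\<Sum>a\<in>A. f (a0 \<otimes> a))"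
      by (rule sum.reindex_bij_witness[where i="\<lambda>a. a0 \<otimes> a" and j="\<lambda>a. inv a0 \<otimes> a"])
         (use a0 a0c in \<open>auto simp: A_carr A_mult A_inv\<close>)
    also have "\<dots> = f a0 * (\<Sum>a\<in>A. f a)" using fm by (simp add: sum_distrib_left)
    finally have eq: "(1 - f a0) * (\<Sum>a\<in>A. f a) = 0" by (simp add: algebra_simps)
    have "f a0 \<noteq> 1"
    proof
      assume "f a0 = 1"
      hence "\<chi> a0 * \<chi>' (inv a0) = \<chi>' a0 * \<chi>' (inv a0)" using invm[OF S(2) a0c] unfolding f_def by simp
      moreover have "\<chi>' (inv a0) \<noteq> 0" using invm[OF S(2) a0c] by auto
      ultimately show False using a0 by simp
    qed
    hence "(\<Sum>a\<in>A. f a) = 0" using eq by simp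
    thus ?thesis using False unfolding f_def by simp
  qed
  obtain s where s: "bij_betw s {0..<L} S" using ex_bij_betw_nat_finite[OF finS] L_def by blast
  obtain e where e: "bij_betw e {0..<k} A" using ex_bij_betw_nat_finite[OF finA] k_def by blast
  have sS: "s i \<in> S" if "i < L" for i using s that bij_betwE by fastforce
  have sinj: "s i = s l \<longleftrightarrow> i = l" if "i < L" "l < L" for i l
    using s that unfolding bij_betw_def inj_on_def by auto
  define M where "M = mat L L (\<lambda>(i,j). if j < k then s i (e j) else (0::complex))"
  define M2 where "M2 = mat L L (\<lambda>(j,l). if j < k then s l (inv (e j)) else (0::complex))"
  have Mc: "M \<in> carrier_mat L L" and M2c: "M2 \<in> carrier_mat L L" unfolding M_def M2_def by auto
  have "M * M2 = of_nat k \<cdot>\<^sub>m 1\<^sub>m L"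
  proof (rule eq_matI)
    fix i l assume i: "i < dim_row (of_nat k \<cdot>\<^sub>m 1\<^sub>m L :: complex mat)" and l: "l < dim_col (of_nat k \<cdot>\<^sub>m 1\<^sub>m L :: complex mat)"
    hence i: "i < L" and l: "l < L" by auto
    have "(M * M2) $$ (i,l) = (\<Sum>j<L. (if j < k then s i (e j) * s l (inv (e j)) else 0))"
      using i l unfolding M_def M2_def by (auto simp: scalar_prod_def atLeast0LessThan intro!: sum.cong)
    also have "\<dots> = (\<Sum>j<k. s i (e j) * s l (inv (e j)))"
      by (rule sum.mono_neutral_cong_right) (use kL k_def L_def in auto)
    also have "\<dots> = (\<Sum>a\<in>A. s i a * s l (inv a))"
      using sum.reindex_bij_betw[OF e, of "\<lambda>a. s i a * s l (inv a)"] by (simp add: atLeast0LessThan)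
    also have "\<dots> = (if i = l then of_nat k else 0)" using orth[OF sS[OF i] sS[OF l]] sinj[OF i l] by simp
    finally show "(M * M2) $$ (i,l) = (of_nat k \<cdot>\<^sub>m 1\<^sub>m L) $$ (i,l)" using i l by auto
  qed (auto simp: M_def M2_def)
  moreover have "\<forall>i<L. M $$ (i, L - 1) = 0" unfolding M_def using kL k_def L_def by auto
  moreover have "(of_nat k :: complex) \<noteq> 0" using finA A_one k_def card_gt_0_iff by fastforce
  ultimately show False using zero_col_contra[OF Mc M2c, where d="of_nat k" and j="L - 1"] kL k_def L_def by auto
qed

end



lemma triv_irrep: "group G \<Longrightarrow> irrep G 1 (\<lambda>_. 1\<^sub>m 1)"
  unfolding irrep_def is_rep_def
proof (intro conjI allI impI ballI)
  fix W assume inv: "invariant_subspace G 1 (\<lambda>_. 1\<^sub>m 1) W"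
  show "W = {0\<^sub>v 1} \<or> W = carrier_vec 1"
  proof (cases "W = {0\<^sub>v 1}")
    case False
    have z: "0\<^sub>v 1 \<in> W" and sub: "W \<subseteq> carrier_vec 1"
      and sm: "\<And>c v. v \<in> W \<Longrightarrow> c \<cdot>\<^sub>v v \<in> W"
      using inv unfolding invariant_subspace_def by auto
    from False z obtain w where w: "w \<in> W" "w \<noteq> 0\<^sub>v 1" by blast
    have wc: "w \<in> carrier_vec 1" using w sub by blast
    have w0: "w $ 0 \<noteq> 0"
    proof
      assume "w $ 0 = 0"
      hence "w = 0\<^sub>v 1" using wc by (intro eq_vecI) auto
      thus False using w by simp
    qed
    have "carrier_vec 1 \<subseteq> W"
    proof
      fix v :: "complex vec" assume v: "v \<in> carrier_vec 1"
      have "v = (v $ 0 / w $ 0) \<cdot>\<^sub>v w" using v wc w0 by (intro eq_vecI) auto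
      thus "v \<in> W" using sm[OF w(1)] by metis
    qed
    thus ?thesis using sub by blast
  qed simp
qed (auto simp: group.is_monoid monoid.one_closed)

context frob
begin

lemma main:
  assumes x: "x \<in> carrier G" "x \<notin> N"
  shows "reduced_norm G (grp_elem G x) x \<notin> \<int>"
proof
  assume intg: "reduced_norm G (grp_elem G x) x \<in> \<int>"
  define Irr where "Irr = irr_chars G"
  define K where "K = card (carrier G)"
  have finI: "finite Irr" unfolding Irr_def using finite_irr_chars[OF is_group fin] .
  define S where "S = {\<chi> \<in> Irr. \<chi> (inv x) \<noteq> 0}"
  have SI: "S \<subseteq> Irr" unfolding S_def by auto
  have finS: "finite S" using finite_subset[OF SI finI] .
  have Kpos: "K > 0" unfolding K_def using fin by (auto simp: card_gt_0_iff)
  have spec: "\<exists>n \<rho>. rep_of_char G \<chi> = (n, \<rho>) \<and> ffirr G A N n \<rho> \<and> \<chi> = rep_char G n \<rho>"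
    if "\<chi> \<in> Irr" for \<chi>
  proof -
    obtain n \<rho> where rp: "rep_of_char G \<chi> = (n, \<rho>)" by (cases "rep_of_char G \<chi>")
    from rep_of_char_spec[of \<chi> G] that rp have "irrep G n \<rho>" "\<chi> = rep_char G n \<rho>"
      unfolding Irr_def by auto
    thus ?thesis using rp frob_ffirr by blast
  qed
  have tm: "(case rep_of_char G \<chi> of (n, \<rho>) \<Rightarrow> det (rep_alg G n \<rho> (grp_elem G x))) * \<chi> \<one>
                / of_nat K * \<chi> (inv x) = (if \<chi> \<in> S then 1 / of_nat K else 0)"
    if chi: "\<chi> \<in> Irr" for \<chi>
  proof -
    obtain n \<rho> where rp: "rep_of_char G \<chi> = (n, \<rho>)" and ff: "ffirr G A N n \<rho>"
      and ch: "\<chi> = rep_char G n \<rho>" using spec[OF chi] by blast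
    have tc: "\<chi> (inv x) = 0 \<or> (det (rep_alg G n \<rho> (grp_elem G x)) * \<chi> \<one> * \<chi> (inv x) = 1 \<and> \<chi> (inv x) \<noteq> 0)"
      using ffirr.term_cases[OF ff x] ch by blast
    show ?thesis
    proof (cases "\<chi> (inv x) = 0")
      case True thus ?thesis unfolding S_def by simp
    next
      case False
      hence "det (rep_alg G n \<rho> (grp_elem G x)) * \<chi> \<one> * \<chi> (inv x) = 1" using tc by blast
      moreover have "\<chi> \<in> S" unfolding S_def using False chi by simp
      ultimately show ?thesis using rp by (simp add: divide_simps mult.commute mult.left_commute)
    qed
  qed
  have lin: "(\<forall>g\<in>carrier G. \<forall>h\<in>carrier G. \<chi> (g \<otimes> h) = \<chi> g * \<chi> h) \<and>
             (\<forall>m\<in>N. \<chi> m = (1::complex)) \<and> (\<forall>g. g \<notin> carrier G \<longrightarrow> \<chi> g = 0)"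
    if chi: "\<chi> \<in> S" for \<chi>
  proof -
    have chI: "\<chi> \<in> Irr" and nz: "\<chi> (inv x) \<noteq> 0" using chi unfolding S_def by auto
    obtain n \<rho> where ff: "ffirr G A N n \<rho>" and ch: "\<chi> = rep_char G n \<rho>" using spec[OF chI] by blast
    have "(\<forall>g\<in>carrier G. \<forall>h\<in>carrier G. \<chi> (g \<otimes> h) = \<chi> g * \<chi> h) \<and> (\<forall>m\<in>N. \<chi> m = 1)"
      using ffirr.term_cases[OF ff x] ch nz by blast
    moreover have "\<forall>g. g \<notin> carrier G \<longrightarrow> \<chi> g = 0" unfolding ch rep_char_def by simp
    ultimately show ?thesis by blast
  qed
  have "reduced_norm G (grp_elem G x) x = (\<Sum>\<chi>\<in>Irr. (if \<chi> \<in> S then 1 / of_nat K else 0))"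
    unfolding reduced_norm_def using x tm by (simp add: Irr_def K_def)
  also have "\<dots> = (\<Sum>\<chi>\<in>S. 1 / of_nat K)"
    by (rule sum.mono_neutral_cong_right) (use finI SI in auto)
  also have "\<dots> = of_nat (card S) / of_nat K" by simp
  finally have rn: "reduced_norm G (grp_elem G x) x = of_nat (card S) / of_nat K" .
  have "card S \<le> card A" by (rule lin_bound[OF finS lin])
  moreover have "card A < K" unfolding K_def
    by (rule psubset_card_mono[OF fin]) (use Aprop A_carr in blast)
  ultimately have SK: "card S < K" by simp
  define \<chi>0 where "\<chi>0 = rep_char G 1 (\<lambda>_. 1\<^sub>m 1)"
  have "\<chi>0 \<in> Irr" unfolding Irr_def irr_chars_def \<chi>0_def using triv_irrep[OF is_group] by blast
  moreover have "\<chi>0 (inv x) = 1" unfolding \<chi>0_def rep_char_def using x by simp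
  ultimately have "\<chi>0 \<in> S" unfolding S_def by simp
  hence "card S \<noteq> 0" using finS by (auto simp: card_eq_0_iff)
  hence S1: "card S \<ge> 1" by simp
  from intg rn obtain z where z: "(of_nat (card S) / of_nat K :: complex) = of_int z"
    by (metis Ints_cases)
  hence "(of_nat (card S) :: complex) = of_int z * of_nat K" using Kpos by (simp add: divide_eq_eq)
  hence "(of_int (int (card S)) :: complex) = of_int (z * int K)" by simp
  hence zi: "int (card S) = z * int K" using of_int_eq_iff by blast
  show False
  proof (cases "z \<ge> 1")
    case True
    hence "z * int K \<ge> 1 * int K" by (intro mult_right_mono) auto
    hence "int K \<le> int (card S)" unfolding zi by simp
    thus False using SK by simp
  next
    case False
    hence "z \<le> 0" by simp
    hence "z * int K \<le> 0" by (simp add: mult_nonpos_nonneg)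
    thus False using zi S1 by simp
  qed
qed

end

theorem lemma3p12:
  fixes G :: "('a, 'b) monoid_scheme" and A :: "'a set"
  assumes "frobenius_kernel G A (derived G (carrier G))"
  shows "\<forall>x \<in> carrier G - derived G (carrier G).
           \<not> in_integral_group_ring G (reduced_norm G (grp_elem G x))"
proof
  fix x assume x: "x \<in> carrier G - derived G (carrier G)"
  from assms have grp: "group G" unfolding frobenius_kernel_def frobenius_complement_def by auto
  interpret group G by (rule grp)
  interpret frob G A "derived G (carrier G)" by (rule frob_from_kernel[OF assms])
  have "reduced_norm G (grp_elem G x) x \<notin> \<int>" using main x by auto
  thus "\<not> in_integral_group_ring G (reduced_norm G (grp_elem G x))"
    unfolding in_integral_group_ring_def using x by auto
qed

end
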